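(* Let $E$ be a regular biordered set satisfying (E1), (E2), (E3) below. Then for all $e,f\in E$ with $f\,\omega\,e'$, in the lattice $L(E)=E/\mathcal L$ we have $\mathcal L(e)\vee\mathcal L(f)=\mathcal L(e\oplus f)$ and $\mathcal L(e)\wedge\mathcal L(f)=\mathcal L(0)=\{0\}$. Conditions: (E1) there exists $0\in E$ with $0\,\omega\,x$ for every $x\in E$; (E2) there is a map $x\mapsto x'$ on $E$ such that for all $x,y\in E$: $(x')'=x$; $y\,\omega^l\,x$ iff $x'\,\omega^r\,y'$; $y\,\omega^l\,x'$ iff $M(y,x)=\{0\}$; (E3) for all $x,y\in E$, if $y\,\omega\,x'$ then $S(x',y')\cap S(y',x')\ne\emptyset$.
   Context: A regular biordered set is a partial algebra isomorphic to the set of idempotents $E(S)$ of a regular semigroup $S$ (regular: every $x$ has $y$ with $xyx=x$), where $ef$ (computed in $S$) is defined when $\{ef,fe\}\cap\{e,f\}\ne\emptyset$. In $E$: $\omega^l=\{(e,f): ef=e\}$, $\omega^r=\{(e,f): fe=e\}$, $\omega=\omega^l\cap\omega^r$; $M(e,f)=\{g\in E: g\,\omega^l\,e,\ g\,\omega^r\,f\}$; for $g,h\in M(e,f)$, $g\preceq h$ iff $eg\,\omega^r\,eh$ and $gf\,\omega^l\,hf$; $S(e,f)=\{h\in M(e,f): g\preceq h\text{ for all }g\in M(e,f)\}$. Under (E1)–(E3), for $f\,\omega\,e'$ the set $S(e',f')\cap S(f',e')$ has exactly one element $k$, and $e\oplus f:=k'$. $\mathcal L=\omega^l\cap(\omega^l)^{-1}$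 with classes $\mathcal L(e)$; $E/\mathcal L$ is ordered by $\mathcal L(e)\le\mathcal L(f)$ iff $e\,\omega^l\,f$ (a lattice under (E1),(E2)). *)

theory Defs
  imports Main
begin

text \<open>A regular biordered set is (up to isomorphism) the set of idempotents E(S) of a
regular semigroup S, with the partial product inherited from S.\<close>

definition regular_semigroup :: "('a::semigroup_mult) itself \<Rightarrow> bool" where
  "regular_semigroup _ \<longleftrightarrow> (\<forall>x::'a. \<exists>y. x * y * x = x)"

definition Idem :: "('a::semigroup_mult) set" where
  "Idem = {e. e * e = e}"

definition omega_l :: "'a::semigroup_mult \<Rightarrow> 'a \<Rightarrow> bool" where
  "omega_l e f \<longleftrightarrow> e * f = e"

definition omega_r :: "'a::semigroup_mult \<Rightarrow> 'a \<Rightarrow> bool" where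
  "omega_r e f \<longleftrightarrow> f * e = e"

definition omega :: "'a::semigroup_mult \<Rightarrow> 'a \<Rightarrow> bool" where
  "omega e f \<longleftrightarrow> omega_l e f \<and> omega_r e f"

definition Mset :: "'a::semigroup_mult \<Rightarrow> 'a \<Rightarrow> 'a set" where
  "Mset e f = {g \<in> Idem. omega_l g e \<and> omega_r g f}"

definition preceq :: "'a::semigroup_mult \<Rightarrow> 'a \<Rightarrow> 'a \<Rightarrow> 'a \<Rightarrow> bool" where
  "preceq e f g h \<longleftrightarrow> omega_r (e * g) (e * h) \<and> omega_l (g * f) (h * f)"

definition Sset :: "'a::semigroup_mult \<Rightarrow> 'a \<Rightarrow> 'a set" where
  "Sset e f = {h \<in> Mset e f. \<forall>g \<in> Mset e f. preceq e f g h}"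

definition E1 :: "'a::semigroup_mult \<Rightarrow> bool" where
  "E1 z \<longleftrightarrow> z \<in> Idem \<and> (\<forall>x \<in> Idem. omega z x)"

definition E2 :: "'a::semigroup_mult \<Rightarrow> ('a \<Rightarrow> 'a) \<Rightarrow> bool" where
  "E2 z c \<longleftrightarrow> (\<forall>x \<in> Idem. c x \<in> Idem) \<and>
     (\<forall>x \<in> Idem. \<forall>y \<in> Idem.
        c (c x) = x \<and>
        (omega_l y x \<longleftrightarrow> omega_r (c x) (c y)) \<and>
        (omega_l y (c x) \<longleftrightarrow> Mset y x = {z}))"

definition E3 :: "('a::semigroup_mult \<Rightarrow> 'a) \<Rightarrow> bool" where
  "E3 c \<longleftrightarrow> (\<forall>x \<in> Idem. \<forall>y \<in> Idem.
      omega y (c x) \<longrightarrow> Sset (c x) (c y) \<inter> Sset (c y) (c x) \<noteq> {})"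

definition oplus :: "('a::semigroup_mult \<Rightarrow> 'a) \<Rightarrow> 'a \<Rightarrow> 'a \<Rightarrow> 'a" where
  "oplus c e f = c (THE k. k \<in> Sset (c e) (c f) \<inter> Sset (c f) (c e))"

definition Lrel :: "'a::semigroup_mult \<Rightarrow> 'a \<Rightarrow> bool" where
  "Lrel e f \<longleftrightarrow> omega_l e f \<and> omega_l f e"

definition Lclass :: "'a::semigroup_mult \<Rightarrow> 'a set" where
  "Lclass e = {g \<in> Idem. Lrel g e}"

definition LE :: "('a::semigroup_mult) set set" where
  "LE = Lclass ` Idem"

text \<open>Order on E/L: L(e) \<le> L(f) iff e omega_l f (well defined on classes).\<close>
definition Lle :: "('a::semigroup_mult) set \<Rightarrow> 'a set \<Rightarrow> bool" where
  "Lle A B \<longleftrightarrow> (\<exists>a \<in> A. \<exists>b \<in> B. a \<in> Idem \<and> b \<in> Idem \<and> omega_l a b)"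

definition is_join :: "('a::semigroup_mult) set \<Rightarrow> 'a set \<Rightarrow> 'a set \<Rightarrow> bool" where
  "is_join A B J \<longleftrightarrow> J \<in> LE \<and> Lle A J \<and> Lle B J \<and>
     (\<forall>C \<in> LE. Lle A C \<and> Lle B C \<longrightarrow> Lle J C)"

definition is_meet :: "('a::semigroup_mult) set \<Rightarrow> 'a set \<Rightarrow> 'a set \<Rightarrow> bool" where
  "is_meet A B J \<longleftrightarrow> J \<in> LE \<and> Lle J A \<and> Lle J B \<and>
     (\<forall>C \<in> LE. Lle C A \<and> Lle C B \<longrightarrow> Lle C J)"

end

theory Submission
  imports Defs
begin

lemma Lclass_self: "e \<in> Idem \<Longrightarrow> e \<in> Lclass e"
  by (simp add: Lclass_def Lrel_def omega_l_def Idem_def)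

lemma Lclass_mem: "a \<in> Lclass e \<Longrightarrow> a \<in> Idem \<and> a * e = a \<and> e * a = e"
  by (simp add: Lclass_def Lrel_def omega_l_def)

theorem proposition5p4:
  fixes z :: "'a::semigroup_mult" and c :: "'a \<Rightarrow> 'a" and e f :: 'a
  assumes "regular_semigroup TYPE('a)"
    and "E1 z" and "E2 z c" and "E3 c"
    and "e \<in> Idem" and "f \<in> Idem" and "omega f (c e)"
  shows "is_join (Lclass e) (Lclass f) (Lclass (oplus c e f))
       \<and> is_meet (Lclass e) (Lclass f) (Lclass z)
       \<and> Lclass z = {z}"
proof -
  have eI: "e * e = e" and fI: "f * f = f" using assms(5,6) by (auto simp: Idem_def)
  have zI: "z \<in> Idem" and zl: "\<And>x. x \<in> Idem \<Longrightarrow> z * x = z" and zr: "\<And>x. x \<in> Idem \<Longrightarrow> x * z = z"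
    using assms(2) by (auto simp: E1_def omega_def omega_l_def omega_r_def)
  have cI: "\<And>x. x \<in> Idem \<Longrightarrow> c x \<in> Idem" using assms(3) by (simp add: E2_def)
  have cc: "\<And>x. x \<in> Idem \<Longrightarrow> c (c x) = x" using assms(3) by (simp add: E2_def)
  have lr: "\<And>x y. x \<in> Idem \<Longrightarrow> y \<in> Idem \<Longrightarrow> (y * x = y) = (c y * c x = c x)"
    using assms(3) unfolding E2_def omega_l_def omega_r_def by blast
  have E2c: "\<And>x y. x \<in> Idem \<Longrightarrow> y \<in> Idem \<Longrightarrow> (y * c x = y) = (Mset y x = {z})"
    using assms(3) unfolding E2_def omega_l_def by blast
  have fe1: "f * c e = f" and fe2: "c e * f = f" using assms(7) by (auto simp: omega_def omega_l_def omega_r_def)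
  have Lz: "Lclass z = {z}"
  proof
    show "Lclass z \<subseteq> {z}"
    proof
      fix g assume "g \<in> Lclass z"
      then have g: "g \<in> Idem" "g * z = g" by (auto dest: Lclass_mem)
      then show "g \<in> {z}" using zr by auto
    qed
    show "{z} \<subseteq> Lclass z" using Lclass_self zI by auto
  qed
  have key0: "\<And>a. a \<in> Idem \<Longrightarrow> a * e = a \<Longrightarrow> a * f = a \<Longrightarrow> a = z"
  proof -
    fix a assume aI: "a \<in> Idem" and ae: "a * e = a" and af: "a * f = a"
    have "a * c e = a * f * c e" using af by simp
    also have "\<dots> = a * (f * c e)" by (simp only: mult.assoc)
    also have "\<dots> = a" using fe1 af by simp
    finally have "a * c e = a" .
    then have M: "Mset a e = {z}" using E2c aI assms(5) by blast
    have aa: "a * a = a" using aI by (simp add: Idem_def)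
    have "e * a * (e * a) = e * (a * e) * a" by (simp only: mult.assoc)
    also have "\<dots> = e * a" using ae aa by (simp add: mult.assoc)
    finally have i1: "e * a * (e * a) = e * a" .
    have i2: "e * a * a = e * a" using aa by (simp add: mult.assoc)
    have i3: "e * (e * a) = e * a" using eI by (simp add: mult.assoc[symmetric])
    have "e * a \<in> Mset a e"
      using i1 i2 i3 unfolding Mset_def Idem_def omega_l_def omega_r_def by simp
    then have ea: "e * a = z" using M by auto
    have "a = a * e * a" using ae aI by (simp add: Idem_def)
    also have "\<dots> = a * z" by (simp add: mult.assoc ea)
    also have "\<dots> = z" using zr aI by simp
    finally show "a = z" .
  qed
  have meet: "is_meet (Lclass e) (Lclass f) (Lclass z)"
    unfolding is_meet_def
  proof (intro conjI ballI impI)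
    show "Lclass z \<in> LE" using zI by (simp add: LE_def)
    show "Lle (Lclass z) (Lclass e)" unfolding Lle_def
      using Lclass_self zI assms(5) zl by (auto simp: omega_l_def)
    show "Lle (Lclass z) (Lclass f)" unfolding Lle_def
      using Lclass_self zI assms(6) zl by (auto simp: omega_l_def)
    fix C assume "C \<in> LE" and "Lle C (Lclass e) \<and> Lle C (Lclass f)"
    then obtain h a b a2 b2 where h: "C = Lclass h" and a: "a \<in> C" and b: "b \<in> Lclass e" and ab: "a * b = a"
      and a2: "a2 \<in> C" and b2: "b2 \<in> Lclass f" and ab2: "a2 * b2 = a2"
      by (auto simp: LE_def Lle_def omega_l_def)
    have A: "a \<in> Idem" "a * h = a" "h * a = h" using a h Lclass_mem by blast+
    have A2: "a2 * h = a2" "h * a2 = h" using a2 h Lclass_mem by blast+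
    have B: "b * e = b" using b Lclass_mem by blast
    have B2: "b2 * f = b2" using b2 Lclass_mem by blast
    have "a * e = a * b * e" using ab by simp
    also have "\<dots> = a * (b * e)" by (simp only: mult.assoc)
    also have "\<dots> = a" using ab B by simp
    finally have ae: "a * e = a" .
    have "a * a2 = a * h * a2" using A(2) by simp
    also have "\<dots> = a * (h * a2)" by (simp only: mult.assoc)
    also have "\<dots> = a" using A(2) A2(2) by simp
    finally have aa2: "a * a2 = a" .
    have "a2 * f = a2 * b2 * f" using ab2 by simp
    also have "\<dots> = a2 * (b2 * f)" by (simp only: mult.assoc)
    also have "\<dots> = a2" using ab2 B2 by simp
    finally have a2f: "a2 * f = a2" .
    have "a * f = a * a2 * f" using aa2 by simp
    also have "\<dots> = a * (a2 * f)" by (simp only: mult.assoc)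
    also have "\<dots> = a" using aa2 a2f by simp
    finally have "a * f = a" .
    then have "a = z" using key0 A(1) ae by blast
    moreover have "z * z = z" using zl zI by blast
    moreover note ae
    ultimately show "Lle C (Lclass z)" unfolding Lle_def omega_l_def
      using a zI Lclass_self[OF zI] by auto
  qed
  have ceI: "c e \<in> Idem" and cfI: "c f \<in> Idem" using cI assms(5,6) by auto
  have "Sset (c e) (c f) \<inter> Sset (c f) (c e) \<noteq> {}"
    using assms(4,5,6,7) by (simp add: E3_def)
  then obtain k where k: "k \<in> Sset (c e) (c f) \<inter> Sset (c f) (c e)" by blast
  have kM: "k \<in> Idem" "k * c e = k" "c f * k = k" "k * c f = k" "c e * k = k"
    using k by (auto simp: Sset_def Mset_def omega_l_def omega_r_def)
  have uniq: "\<And>k2. k2 \<in> Sset (c e) (c f) \<inter> Sset (c f) (c e) \<Longrightarrow> k2 = k"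
  proof -
    fix k2 assume k2: "k2 \<in> Sset (c e) (c f) \<inter> Sset (c f) (c e)"
    have k2M: "k2 * c e = k2" "c f * k2 = k2" "k2 * c f = k2" "c e * k2 = k2"
      using k2 by (auto simp: Sset_def Mset_def omega_l_def omega_r_def)
    have p1: "preceq (c e) (c f) k2 k" using k k2 by (auto simp: Sset_def)
    have p2: "preceq (c e) (c f) k k2" using k k2 by (auto simp: Sset_def)
    have "k * k2 = k2" using p1 kM k2M by (simp add: preceq_def omega_r_def)
    moreover have "k2 * k = k2" using p1 kM k2M by (simp add: preceq_def omega_l_def)
    moreover have "k2 * k = k" using p2 kM k2M by (simp add: preceq_def omega_r_def)
    ultimately show "k2 = k" by simp
  qed
  have op: "oplus c e f = c k"
    unfolding oplus_def using k uniq by (metis the_equality)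
  have ckI: "c k \<in> Idem" using cI kM(1) by blast
  have e_le: "e * c k = e"
    using lr[OF ckI assms(5)] cc[OF kM(1)] kM(5) by simp
  have f_le: "f * c k = f"
    using lr[OF ckI assms(6)] cc[OF kM(1)] kM(3) by simp
  have join: "is_join (Lclass e) (Lclass f) (Lclass (c k))"
    unfolding is_join_def
  proof (intro conjI ballI impI)
    show "Lclass (c k) \<in> LE" using ckI by (simp add: LE_def)
    show "Lle (Lclass e) (Lclass (c k))" unfolding Lle_def omega_l_def
      using Lclass_self assms(5) ckI e_le by blast
    show "Lle (Lclass f) (Lclass (c k))" unfolding Lle_def omega_l_def
      using Lclass_self assms(6) ckI f_le by blast
    fix C assume "C \<in> LE" and "Lle (Lclass e) C \<and> Lle (Lclass f) C"
    then obtain h a b a2 b2 where h: "C = Lclass h" and hI: "h \<in> Idem" and a: "a \<in> Lclass e" and b: "b \<in> C" and ab: "a * b = a"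
      and a2: "a2 \<in> Lclass f" and b2: "b2 \<in> C" and ab2: "a2 * b2 = a2"
      by (auto simp: LE_def Lle_def omega_l_def)
    have A: "e * a = e" using a Lclass_mem by blast
    have A2: "f * a2 = f" using a2 Lclass_mem by blast
    have B: "b * h = b" using b h Lclass_mem by blast
    have B2: "b2 * h = b2" using b2 h Lclass_mem by blast
    have "a * h = a * b * h" using ab by simp
    also have "\<dots> = a * (b * h)" by (simp only: mult.assoc)
    also have "\<dots> = a" using ab B by simp
    finally have ah: "a * h = a" .
    have "e * h = e * a * h" using A by simp
    also have "\<dots> = e * (a * h)" by (simp only: mult.assoc)
    also have "\<dots> = e" using A ah by simp
    finally have eh: "e * h = e" .
    have "a2 * h = a2 * b2 * h" using ab2 by simp
    also have "\<dots> = a2 * (b2 * h)" by (simp only: mult.assoc)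
    also have "\<dots> = a2" using ab2 B2 by simp
    finally have a2h: "a2 * h = a2" .
    have "f * h = f * a2 * h" using A2 by simp
    also have "\<dots> = f * (a2 * h)" by (simp only: mult.assoc)
    also have "\<dots> = f" using A2 a2h by simp
    finally have fh: "f * h = f" .
    have chI: "c h \<in> Idem" using cI hI by blast
    have h1: "c e * c h = c h" using lr[OF hI assms(5)] eh by simp
    have hh: "c h * c h = c h" using chI by (simp add: Idem_def)
    define g where "g = c h * c e"
    have cfh: "c f * c h = c h" using lr[OF hI assms(6)] fh by simp
    have cee: "c e * c e = c e" using ceI by (simp add: Idem_def)
    have g1: "g * g = g" unfolding g_def
    proof -
      have "c h * c e * (c h * c e) = c h * (c e * c h) * c e" by (simp only: mult.assoc)
      also have "\<dots> = c h * c e" using h1 hh by (simp add: mult.assoc)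
      finally show "c h * c e * (c h * c e) = c h * c e" .
    qed
    have g2: "g * c e = g" unfolding g_def using cee by (simp add: mult.assoc)
    have g3: "c f * g = g" unfolding g_def using cfh by (simp add: mult.assoc[symmetric])
    have gM: "g \<in> Mset (c e) (c f)"
      unfolding Mset_def Idem_def omega_l_def omega_r_def using g1 g2 g3 by simp
    have "preceq (c e) (c f) g k" using k gM by (auto simp: Sset_def)
    then have "k * (c e * g) = c e * g" by (simp add: preceq_def omega_r_def mult.assoc kM(5))
    moreover have "c e * g = g" unfolding g_def using h1 by (simp add: mult.assoc[symmetric])
    ultimately have kg: "k * g = g" by simp
    have "g * c h = c h" unfolding g_def using h1 hh by (simp add: mult.assoc)
    then have "k * c h = k * (g * c h)" by simp
    also have "\<dots> = k * g * c h" by (simp only: mult.assoc)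
    also have "\<dots> = c h" using kg \<open>g * c h = c h\<close> by simp
    finally have "k * c h = c h" .
    then have "c k * h = c k" using lr[OF hI ckI] cc[OF kM(1)] by simp
    then show "Lle (Lclass (c k)) C" unfolding Lle_def omega_l_def h
      using Lclass_self ckI hI by blast
  qed
  show ?thesis using join meet Lz op by simp
qed

end
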